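(* Let $G$ be a simple, undirected, connected graph on $N$ vertices with edge set $E$ and degree sequence $d_1\le d_2\le\cdots\le d_N$. Then $$R^+(G)\ge N(N-4)+2|E|\sum_{j=1}^N\frac{1}{d_j}.$$
   Context: For vertices $i,j$ of $G$, $R_{ij}$ denotes the effective resistance between $i$ and $j$ when every edge of $G$ is a unit resistor. The additive degree-Kirchhoff index is $R^+(G)=\sum_{i<j}(d_i+d_j)R_{ij}$, where $d_i$ is the degree of vertex $i$. *)

theory Defs
  imports Complex_Main
begin

definition simple_graph :: "nat \<Rightarrow> nat set set \<Rightarrow> bool" where
  "simple_graph N E \<longleftrightarrow> (\<forall>e\<in>E. \<exists>u v. u < N \<and> v < N \<and> u \<noteq> v \<and> e = {u, v})"

definition adj :: "nat set set \<Rightarrow> nat \<Rightarrow> nat \<Rightarrow> bool" where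
  "adj E u v \<longleftrightarrow> {u, v} \<in> E"

definition connected_graph :: "nat \<Rightarrow> nat set set \<Rightarrow> bool" where
  "connected_graph N E \<longleftrightarrow> (\<forall>u<N. \<forall>v<N. (u, v) \<in> {(a, b). adj E a b}\<^sup>*)"

definition degree :: "nat \<Rightarrow> nat set set \<Rightarrow> nat \<Rightarrow> nat" where
  "degree N E v = card {u. u < N \<and> adj E u v}"

text \<open>Effective resistance between i and j with unit resistors: inject a unit current at i,
  extract it at j; by Kirchhoff's laws the node potentials x satisfy (L x)_k = [k=i] - [k=j],
  and R_ij is the potential difference x_i - x_j.\<close>

definition eff_res :: "nat \<Rightarrow> nat set set \<Rightarrow> nat \<Rightarrow> nat \<Rightarrow> real" where
  "eff_res N E i j = (THE r. \<exists>x :: nat \<Rightarrow> real.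
      (\<forall>k<N. (\<Sum>l<N. if adj E k l then x k - x l else 0)
              = (if k = i then 1 else 0) - (if k = j then 1 else 0))
      \<and> r = x i - x j)"

definition add_deg_kirchhoff :: "nat \<Rightarrow> nat set set \<Rightarrow> real" where
  "add_deg_kirchhoff N E =
     (\<Sum>j<N. \<Sum>i<j. (real (degree N E i) + real (degree N E j)) * eff_res N E i j)"

end

theory Submission
  imports Defs "Jordan_Normal_Form.Determinant"
begin

hide_const (open) Polynomial.degree


definition Lap :: "nat \<Rightarrow> nat set set \<Rightarrow> (nat \<Rightarrow> real) \<Rightarrow> nat \<Rightarrow> real" where
  "Lap N E x k = (\<Sum>l<N. if adj E k l then x k - x l else 0)"

lemma adj_sym: "adj E u v = adj E v u"
  by (simp add: adj_def insert_commute)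

lemma adj_irrefl: "simple_graph N E \<Longrightarrow> \<not> adj E u u"
  unfolding simple_graph_def adj_def
  by (metis doubleton_eq_iff)

lemma adj_lt: "simple_graph N E \<Longrightarrow> adj E u v \<Longrightarrow> u < N \<and> v < N"
  unfolding simple_graph_def adj_def
  by (metis doubleton_eq_iff)

lemma finite_E: "simple_graph N E \<Longrightarrow> finite E"
proof -
  assume "simple_graph N E"
  then have "E \<subseteq> Pow {..<N}" unfolding simple_graph_def by auto
  then show ?thesis by (meson finite_Pow_iff finite_lessThan rev_finite_subset)
qed

lemma lap_sum: "(\<Sum>k<N. Lap N E x k) = 0"
proof -
  let ?f = "\<lambda>k l. if adj E k l then x k - x l else (0::real)"
  have "(\<Sum>k<N. \<Sum>l<N. ?f k l) = (\<Sum>l<N. \<Sum>k<N. ?f k l)" by (rule sum.swap)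
  also have "\<dots> = (\<Sum>l<N. \<Sum>k<N. - ?f l k)"
    by (intro sum.cong refl) (auto simp: adj_sym)
  also have "\<dots> = - (\<Sum>l<N. \<Sum>k<N. ?f l k)" by (simp add: sum_negf)
  finally show ?thesis unfolding Lap_def by simp
qed

lemma energy: "(\<Sum>k<N. x k * Lap N E x k) = (\<Sum>k<N. \<Sum>l<N. if adj E k l then (x k - x l)^2 else 0) / 2"
proof -
  let ?f = "\<lambda>k l. if adj E k l then x k * (x k - x l) else (0::real)"
  let ?g = "\<lambda>k l. if adj E k l then - x l * (x k - x l) else (0::real)"
  have A: "(\<Sum>k<N. x k * Lap N E x k) = (\<Sum>k<N. \<Sum>l<N. ?f k l)"
    unfolding Lap_def sum_distrib_left by (intro sum.cong refl) auto
  have "(\<Sum>k<N. \<Sum>l<N. ?f k l) = (\<Sum>l<N. \<Sum>k<N. ?f k l)" by (rule sum.swap)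
  also have "\<dots> = (\<Sum>l<N. \<Sum>k<N. ?g l k)"
    by (intro sum.cong refl) (auto simp: adj_sym algebra_simps)
  finally have B: "(\<Sum>k<N. \<Sum>l<N. ?f k l) = (\<Sum>k<N. \<Sum>l<N. ?g k l)" .
  have C: "(\<Sum>k<N. \<Sum>l<N. ?f k l) + (\<Sum>k<N. \<Sum>l<N. ?g k l) = (\<Sum>k<N. \<Sum>l<N. if adj E k l then (x k - x l)^2 else 0)"
    by (simp add: sum.distrib[symmetric] power2_eq_square algebra_simps if_distrib cong: if_cong) 
  show ?thesis using A B C by simp
qed

lemma lap_zero_const:
  assumes sg: "simple_graph N E" and cg: "connected_graph N E"
    and z: "\<forall>k<N. Lap N E z k = 0" and a: "a < N" and b: "b < N"
  shows "z a = z b"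
proof -
  have "(\<Sum>k<N. z k * Lap N E z k) = 0" using z by simp
  then have S: "(\<Sum>k<N. \<Sum>l<N. if adj E k l then (z k - z l)^2 else 0) = 0"
    using energy[where x=z and N=N and E=E] by simp
  have each: "z k = z l" if "k < N" "l < N" "adj E k l" for k l
  proof -
    have "(\<Sum>l<N. if adj E k l then (z k - z l)^2 else 0) = 0"
      using S that(1) by (subst (asm) sum_nonneg_eq_0_iff) (auto intro!: sum_nonneg)
    then have "(if adj E k l then (z k - z l)^2 else 0) = 0"
      using that(2) by (subst (asm) sum_nonneg_eq_0_iff) auto
    then show ?thesis using that(3) by simp
  qed
  have step: "z u = z v" if "adj E u v" for u v
    using each adj_lt[OF sg that] that by auto
  from cg a b have "(a, b) \<in> {(a, b). adj E a b}\<^sup>*" unfolding connected_graph_def by auto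
  then show ?thesis
    by (induction rule: rtrancl_induct) (auto dest: step)
qed

lemma eff_res_char:
  assumes sg: "simple_graph N E" and cg: "connected_graph N E"
    and x: "\<forall>k<N. Lap N E x k = (if k = i then 1 else 0) - (if k = j then 1 else 0)"
    and i: "i < N" and j: "j < N"
  shows "eff_res N E i j = x i - x j"
  unfolding eff_res_def
proof (rule the_equality)
  show "\<exists>x'. (\<forall>k<N. (\<Sum>l<N. if adj E k l then x' k - x' l else 0) =
             (if k = i then 1 else 0) - (if k = j then 1 else 0)) \<and> x i - x j = x' i - x' j"
    using x unfolding Lap_def by blast
next
  fix r :: real assume "\<exists>y. (\<forall>k<N. (\<Sum>l<N. if adj E k l then y k - y l else 0) =
             (if k = i then 1 else 0) - (if k = j then 1 else 0)) \<and> r = y i - y j"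
  then obtain y where y: "\<forall>k<N. Lap N E y k = (if k = i then 1 else 0) - (if k = j then 1 else 0)"
    and r: "r = y i - y j" unfolding Lap_def by blast
  have "Lap N E (\<lambda>k. x k - y k) k = Lap N E x k - Lap N E y k" for k
    unfolding Lap_def by (simp add: sum_subtractf[symmetric] if_distrib algebra_simps cong: if_cong)
  then have "\<forall>k<N. Lap N E (\<lambda>k. x k - y k) k = 0" using x y by simp
  from lap_zero_const[OF sg cg this i j] show "r = x i - x j" using r by simp
qed

lemma cs_card:
  fixes f :: "nat \<Rightarrow> real"
  assumes "finite S"
  shows "(\<Sum>l\<in>S. f l)^2 \<le> real (card S) * (\<Sum>l\<in>S. (f l)^2)"
proof -
  have "0 \<le> (\<Sum>a\<in>S. \<Sum>b\<in>S. (f a - f b)^2)" by (intro sum_nonneg) auto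
  also have "\<dots> = (\<Sum>a\<in>S. \<Sum>b\<in>S. (f a)^2 + (f b)^2 - 2 * (f a * f b))"
    by (simp add: power2_eq_square algebra_simps)
  also have "\<dots> = 2 * (real (card S) * (\<Sum>l\<in>S. (f l)^2)) - 2 * (\<Sum>l\<in>S. f l)^2"
    by (simp add: sum.distrib sum_subtractf sum_distrib_left sum_distrib_right power2_eq_square
        flip: sum_distrib_left)
  finally show ?thesis by simp
qed

definition Wv :: "nat \<Rightarrow> nat set set \<Rightarrow> (nat \<Rightarrow> real) \<Rightarrow> nat \<Rightarrow> real" where
  "Wv N E x v = (\<Sum>l<N. if adj E v l then (x v - x l)^2 else 0)"

lemma degree_card: "degree N E v = card {l\<in>{..<N}. adj E v l}"
  unfolding Defs.degree_def by (rule arg_cong[where f=card]) (auto simp: adj_sym)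

lemma star1: "(Lap N E x v)^2 \<le> real (degree N E v) * Wv N E x v"
proof -
  let ?S = "{l\<in>{..<N}. adj E v l}"
  have L: "Lap N E x v = (\<Sum>l\<in>?S. x v - x l)"
    unfolding Lap_def by (rule sum.inter_filter[symmetric]) simp
  have Wd: "Wv N E x v = (\<Sum>l\<in>?S. (x v - x l)^2)"
    unfolding Wv_def by (rule sum.inter_filter[symmetric]) simp
  show ?thesis unfolding L Wd degree_card by (rule cs_card) auto
qed

lemma star2:
  assumes "adj E v u" "u < N"
  shows "(Lap N E x v - (x v - x u))^2 \<le> (real (degree N E v) - 1) * (Wv N E x v - (x v - x u)^2)"
proof -
  let ?S = "{l\<in>{..<N}. adj E v l}"
  have u: "u \<in> ?S" using assms by auto
  have fin: "finite ?S" by auto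
  have L: "Lap N E x v = (\<Sum>l\<in>?S. x v - x l)"
    unfolding Lap_def by (rule sum.inter_filter[symmetric]) simp
  have Wd: "Wv N E x v = (\<Sum>l\<in>?S. (x v - x l)^2)"
    unfolding Wv_def by (rule sum.inter_filter[symmetric]) simp
  have L2: "Lap N E x v - (x v - x u) = (\<Sum>l\<in>?S - {u}. x v - x l)"
    unfolding L using sum.remove[OF fin u, of "\<lambda>l. x v - x l"] by simp
  have W2: "Wv N E x v - (x v - x u)^2 = (\<Sum>l\<in>?S - {u}. (x v - x l)^2)"
    unfolding Wd using sum.remove[OF fin u, of "\<lambda>l. (x v - x l)^2"] by simp
  have c: "real (card (?S - {u})) = real (degree N E v) - 1"
  proof -
    have "card ?S \<ge> 1" using u fin by (metis One_nat_def Suc_leI card_gt_0_iff empty_iff)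
    then show ?thesis using u fin by (simp add: card_Diff_singleton degree_card)
  qed
  show ?thesis unfolding L2 W2 c[symmetric] by (rule cs_card) auto
qed

lemma alg_bound:
  fixes a b R Ti Tj :: real
  assumes a: "a \<ge> 1" and b: "b \<ge> 1" and R0: "R \<ge> 0"
    and h: "R \<ge> R^2 + Ti + Tj"
    and hi: "(1 - R)^2 \<le> (a - 1) * Ti" and hj: "(1 - R)^2 \<le> (b - 1) * Tj"
  shows "R \<ge> 1/a + 1/b - 2/(a*b)"
proof -
  have ab: "a * b > 0" using a b by simp
  have pab: "(a - 1) * (b - 1) \<ge> 0" using a b by simp
  have goal: "R * (a * b) \<ge> a + b - 2"
  proof (cases "R \<ge> 1")
    case True
    have "a + b - 2 \<le> a * b" using pab by (simp add: algebra_simps)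
    also have "\<dots> \<le> R * (a * b)" using mult_right_mono[OF True, of "a*b"] ab by simp
    finally show ?thesis .
  next
    case False
    define s where "s = 1 - R"
    have s0: "s > 0" "s \<le> 1" using False R0 by (auto simp: s_def)
    have hi': "s^2 \<le> (a - 1) * Ti" and hj': "s^2 \<le> (b - 1) * Tj" using hi hj by (auto simp: s_def)
    have Rs: "R * s \<ge> Ti + Tj" using h by (simp add: s_def power2_eq_square algebra_simps)
    have m1: "(Ti + Tj) * ((a - 1) * (b - 1)) \<le> R * s * ((a - 1) * (b - 1))"
      using Rs pab by (rule mult_right_mono)
    have m2: "s^2 * (b-1) \<le> ((a-1)*Ti) * (b-1)" using hi' b by (intro mult_right_mono) auto
    have m3: "s^2 * (a-1) \<le> ((b-1)*Tj) * (a-1)" using hj' a by (intro mult_right_mono) auto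
    have e: "(Ti + Tj) * ((a - 1) * (b - 1)) = ((a-1)*Ti) * (b-1) + ((b-1)*Tj) * (a-1)"
      by (simp add: algebra_simps)
    have "s^2 * (b-1) + s^2 * (a-1) \<le> R * s * ((a - 1) * (b - 1))"
      using m1 m2 m3 e by linarith
    then have "s * (s * (a + b - 2)) \<le> s * (R * ((a - 1) * (b - 1)))"
      by (simp add: power2_eq_square algebra_simps)
    then have "s * (a + b - 2) \<le> R * ((a - 1) * (b - 1))"
      using s0 by (simp add: mult_le_cancel_left_pos)
    then have k: "s * (a * b - 1) \<le> (a - 1) * (b - 1)"
      by (simp add: s_def algebra_simps)
    have "s * (a * b) \<le> (a - 1) * (b - 1) + 1" using k s0 by (simp add: algebra_simps)
    then show ?thesis by (simp add: s_def algebra_simps)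
  qed
  have "1/a + 1/b - 2/(a*b) = (a + b - 2) / (a * b)"
    using a b by (simp add: field_simps)
  also have "\<dots> \<le> R" using goal ab by (simp add: divide_le_eq)
  finally show ?thesis .
qed

lemma sum2:
  assumes "finite A" "i \<in> A" "j \<in> A" "i \<noteq> j"
  shows "sum f A = f i + f j + sum f (A - {i, j})"
proof -
  have "sum f A = f i + sum f (A - {i})" using assms sum.remove by metis
  also have "sum f (A - {i}) = f j + sum f (A - {i} - {j})"
    using assms by (intro sum.remove) auto
  moreover have "A - {i} - {j} = A - {i, j}" by auto
  ultimately show ?thesis by (simp add: add.assoc)
qed

lemma pair_bound:
  assumes sg: "simple_graph N E" and i: "i < N" and j: "j < N" and ij: "i \<noteq> j"
    and x: "\<forall>k<N. Lap N E x k = (if k = i then 1 else 0) - (if k = j then 1 else 0)"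
  shows "real (degree N E i) \<ge> 1"
    and "x i - x j \<ge> 1 / real (degree N E i) + 1 / real (degree N E j)
          - (if adj E i j then 2 / (real (degree N E i) * real (degree N E j)) else 0)"
proof -
  define w where "w k l = (if adj E k l then (x k - x l)^2 else (0::real))" for k l
  define R where "R = x i - x j"
  define a where "a = real (degree N E i)"
  define b where "b = real (degree N E j)"
  have wsym: "w k l = w l k" for k l by (simp add: w_def adj_sym power2_commute)
  have wnn: "w k l \<ge> 0" for k l by (simp add: w_def)
  have Wrow: "Wv N E x k = (\<Sum>l<N. w k l)" for k by (simp add: Wv_def w_def)
  have lapx: "(\<Sum>k<N. x k * Lap N E x k) = R"
  proof -
    have "(\<Sum>k<N. x k * Lap N E x k) = (\<Sum>k<N. (if k = i then x k else 0) - (if k = j then x k else 0))"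
      by (intro sum.cong refl) (simp add: x)
    also have "\<dots> = R" using i j by (simp add: sum_subtractf R_def)
    finally show ?thesis .
  qed
  have RQ: "R = (\<Sum>k<N. \<Sum>l<N. w k l) / 2"
    using energy[where x=x and N=N and E=E] lapx by (simp add: w_def)
  have R0: "R \<ge> 0" unfolding RQ by (intro divide_nonneg_pos sum_nonneg) (auto simp: wnn)
  let ?A = "{..<N} - {i,j}"
  have fin: "finite {..<N}" by simp
  have Q1: "(\<Sum>k<N. \<Sum>l<N. w k l) = Wv N E x i + Wv N E x j + (\<Sum>k\<in>?A. \<Sum>l<N. w k l)"
    using sum2[OF fin, of i j "\<lambda>k. \<Sum>l<N. w k l"] i j ij by (simp add: Wrow)
  have rowbound: "w k i + w k j \<le> (\<Sum>l<N. w k l)" for k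
  proof -
    have "(\<Sum>l<N. w k l) = w k i + w k j + (\<Sum>l\<in>?A. w k l)"
      using sum2[OF fin, of i j "w k"] i j ij by simp
    moreover have "(\<Sum>l\<in>?A. w k l) \<ge> 0" by (intro sum_nonneg) (simp add: wnn)
    ultimately show ?thesis by simp
  qed
  have Q2: "(\<Sum>k\<in>?A. w k i) + (\<Sum>k\<in>?A. w k j) \<le> (\<Sum>k\<in>?A. \<Sum>l<N. w k l)"
    unfolding sum.distrib[symmetric] by (intro sum_mono rowbound)
  have wii: "w k k = 0" for k using adj_irrefl[OF sg] by (simp add: w_def)
  have C1: "(\<Sum>k\<in>?A. w k i) = Wv N E x i - w i j"
  proof -
    have "(\<Sum>k<N. w k i) = w i i + w j i + (\<Sum>k\<in>?A. w k i)"
      using sum2[OF fin, of i j "\<lambda>k. w k i"] i j ij by simp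
    moreover have "(\<Sum>k<N. w k i) = Wv N E x i" by (simp add: Wrow wsym)
    ultimately show ?thesis using wii wsym[of j i] by simp
  qed
  have C2: "(\<Sum>k\<in>?A. w k j) = Wv N E x j - w i j"
  proof -
    have "(\<Sum>k<N. w k j) = w i j + w j j + (\<Sum>k\<in>?A. w k j)"
      using sum2[OF fin, of i j "\<lambda>k. w k j"] i j ij by simp
    moreover have "(\<Sum>k<N. w k j) = Wv N E x j" by (simp add: Wrow wsym)
    ultimately show ?thesis using wii by simp
  qed
  have main: "R \<ge> Wv N E x i + Wv N E x j - w i j" using RQ Q1 Q2 C1 C2 by linarith
  have Lapi: "Lap N E x i = 1" using x i ij by simp
  have Lapj: "Lap N E x j = -1" using x j ij by simp
  have si: "1 \<le> a * Wv N E x i" using star1[of N E x i] Lapi by (simp add: a_def)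
  have sj: "1 \<le> b * Wv N E x j" using star1[of N E x j] Lapj by (simp add: b_def)
  have a1: "a \<ge> 1"
  proof -
    have "a \<noteq> 0" using si by auto
    then have "degree N E i \<ge> 1" unfolding a_def by simp
    then show ?thesis unfolding a_def by simp
  qed
  have b1: "b \<ge> 1"
  proof -
    have "b \<noteq> 0" using sj by auto
    then have "degree N E j \<ge> 1" unfolding b_def by simp
    then show ?thesis unfolding b_def by simp
  qed
  show "real (degree N E i) \<ge> 1" using a1 by (simp add: a_def)
  have Wi: "1 / a \<le> Wv N E x i" using si a1 by (simp add: divide_le_eq mult.commute)
  have Wj: "1 / b \<le> Wv N E x j" using sj b1 by (simp add: divide_le_eq mult.commute)
  have "R \<ge> 1 / a + 1 / b - (if adj E i j then 2 / (a * b) else 0)"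
  proof (cases "adj E i j")
    case False
    then have "w i j = 0" by (simp add: w_def)
    then show ?thesis using main Wi Wj False by simp
  next
    case True
    then have wij: "w i j = R^2" by (simp add: w_def R_def)
    have hi: "(1 - R)^2 \<le> (a - 1) * (Wv N E x i - R^2)"
      using star2[of E i j N x] True j Lapi by (simp add: a_def R_def)
    have adj': "adj E j i" using True adj_sym by metis
    have "(Lap N E x j - (x j - x i))^2 \<le> (b - 1) * (Wv N E x j - (x j - x i)^2)"
      using star2[of E j i N x] adj' i by (simp add: b_def)
    moreover have "(Lap N E x j - (x j - x i))^2 = (1 - R)^2"
      using Lapj by (simp add: R_def power2_eq_square algebra_simps)
    moreover have "(x j - x i)^2 = R^2" by (simp add: R_def power2_commute)
    ultimately have hj: "(1 - R)^2 \<le> (b - 1) * (Wv N E x j - R^2)" by simp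
    have h: "R \<ge> R^2 + (Wv N E x i - R^2) + (Wv N E x j - R^2)" using main wij by simp
    from alg_bound[OF a1 b1 R0 h hi hj] True show ?thesis by simp
  qed
  then show "x i - x j \<ge> 1 / real (degree N E i) + 1 / real (degree N E j)
          - (if adj E i j then 2 / (real (degree N E i) * real (degree N E j)) else 0)"
    unfolding R_def a_def b_def .
qed

lemma card_pairs:
  fixes a b :: nat
  assumes ab: "a \<noteq> b" "e = {a, b}"
  shows "card {(v, u). {u, v} = e} = 2"
proof -
  have dd: "({u, v} = {a, b}) = (u = a \<and> v = b \<or> u = b \<and> v = a)" for u v :: nat
    by (rule doubleton_eq_iff)
  have "{(v, u). {u, v} = e} = {(a, b), (b, a)}"
  proof (rule Set.set_eqI)
    fix p :: "nat \<times> nat"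
    obtain v u where p: "p = (v, u)" by fastforce
    have "({u, v} = e) = ((v, u) = (a, b) \<or> (v, u) = (b, a))"
      unfolding ab(2) dd by blast
    then show "(p \<in> {(v, u). {u, v} = e}) = (p \<in> {(a, b), (b, a)})" unfolding p by simp
  qed
  then show ?thesis using ab(1) by simp
qed

lemma handshake:
  assumes sg: "simple_graph N E"
  shows "(\<Sum>v<N. degree N E v) = 2 * card E"
proof -
  define P where "P = Sigma {..<N} (\<lambda>v. {u. u < N \<and> adj E u v})"
  have cP: "card P = (\<Sum>v<N. degree N E v)"
    unfolding P_def Defs.degree_def by (rule card_SigmaI) auto
  define F where "F e = {(v, u). {u, v} = e}" for e :: "nat set"
  have PU: "P = (\<Union>e\<in>E. F e)"
  proof
    show "P \<subseteq> (\<Union>e\<in>E. F e)"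
    proof
      fix p assume "p \<in> P"
      then obtain v u where p: "p = (v, u)" and e: "adj E u v" unfolding P_def by blast
      have e': "{u, v} \<in> E" using e by (simp add: adj_def)
      show "p \<in> (\<Union>e\<in>E. F e)"
        by (rule UN_I[OF e']) (simp add: F_def p)
    qed
    show "(\<Union>e\<in>E. F e) \<subseteq> P"
    proof
      fix p assume "p \<in> (\<Union>e\<in>E. F e)"
      then obtain e where eE: "e \<in> E" and pF: "p \<in> F e" by blast
      obtain v u where p: "p = (v, u)" by fastforce
      have "{u, v} = e" using pF unfolding p F_def by simp
      then have a: "adj E u v" using eE by (simp add: adj_def)
      have "u < N \<and> v < N" by (rule adj_lt[OF sg a])
      then show "p \<in> P" unfolding P_def p using a by simp
    qed
  qed
  have cF: "card (F e) = 2" if "e \<in> E" for e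
  proof -
    have "\<exists>u v. u < N \<and> v < N \<and> u \<noteq> v \<and> e = {u, v}"
      using sg that unfolding simple_graph_def by (rule bspec)
    then obtain a where "\<exists>v. a < N \<and> v < N \<and> a \<noteq> v \<and> e = {a, v}" by (rule exE)
    then obtain b where abc: "a < N \<and> b < N \<and> a \<noteq> b \<and> e = {a, b}" by (rule exE)
    have ab: "a \<noteq> b" "e = {a, b}" using abc by simp_all
    show ?thesis unfolding F_def by (rule card_pairs[OF ab])
  qed
  have finF: "finite (F e)" if "e \<in> E" for e
    by (rule card_ge_0_finite) (simp add: cF[OF that])
  have disj: "\<forall>e\<in>E. \<forall>e'\<in>E. e \<noteq> e' \<longrightarrow> F e \<inter> F e' = {}"
  proof (intro ballI impI)
    fix e e' :: "nat set" assume ne: "e \<noteq> e'"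
    show "F e \<inter> F e' = {}"
    proof (rule ccontr)
      assume "F e \<inter> F e' \<noteq> {}"
      then obtain p where pe: "p \<in> F e" and pe': "p \<in> F e'" by blast
      obtain v u where p: "p = (v, u)" by fastforce
      have "{u, v} = e" using pe unfolding p F_def by simp
      moreover have "{u, v} = e'" using pe' unfolding p F_def by simp
      ultimately show False using ne by simp
    qed
  qed
  have "card P = (\<Sum>e\<in>E. card (F e))"
    unfolding PU by (rule card_UN_disjoint[OF finite_E[OF sg] _ disj]) (simp add: finF)
  also have "\<dots> = 2 * card E" using cF by simp
  finally show ?thesis using cP by simp
qed

lemma sum_adj1: "(\<Sum>l<N. if adj E k l then c else 0) = c * real (degree N E k)"
proof -
  have "(\<Sum>l<N. if adj E k l then c else 0) = (\<Sum>l\<in>{l\<in>{..<N}. adj E k l}. c)"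
    by (rule sum.inter_filter[symmetric]) simp
  then show ?thesis by (simp add: degree_card)
qed

lemma sum_adj2: "(\<Sum>l<N. if adj E l k then c else 0) = c * real (degree N E k)"
proof -
  have "\<And>l. adj E l k = adj E k l" by (rule adj_sym)
  then show ?thesis using sum_adj1[where N=N and E=E and k=k and c=c] by (simp only:)
qed

lemma sym_sum:
  fixes g :: "nat \<Rightarrow> nat \<Rightarrow> real"
  assumes "\<And>i j. g i j = g j i"
  shows "(\<Sum>j<N. \<Sum>i<N. g i j) = 2 * (\<Sum>j<N. \<Sum>i<j. g i j) + (\<Sum>j<N. g j j)"
proof (induction N)
  case 0 then show ?case by simp
next
  case (Suc N)
  have "(\<Sum>j<Suc N. \<Sum>i<Suc N. g i j) = (\<Sum>j<N. \<Sum>i<N. g i j) + (\<Sum>j<N. g N j) + (\<Sum>i<N. g i N) + g N N"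
    by (simp add: sum.distrib)
  also have "(\<Sum>j<N. g N j) = (\<Sum>i<N. g i N)" by (intro sum.cong refl) (rule assms)
  finally show ?case using Suc by simp
qed

lemma final_sum:
  assumes sg: "simple_graph N E" and dpos: "\<And>v. v < N \<Longrightarrow> real (degree N E v) \<ge> 1"
  defines "d \<equiv> \<lambda>v. real (degree N E v)"
  defines "g \<equiv> \<lambda>i j. (d i + d j) * (1 / d i + 1 / d j - (if adj E i j then 2 / (d i * d j) else 0))"
  shows "(\<Sum>j<N. \<Sum>i<j. g i j) = real N * (real N - 4) + 2 * real (card E) * (\<Sum>j<N. 1 / d j)"
proof -
  define H where "H = (\<Sum>j<N. 1 / d j)"
  have dnz: "d v \<noteq> 0" if "v < N" for v using dpos[OF that] unfolding d_def by linarith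
  define D where "D = (\<Sum>j<N. d j)"
  have D2: "D = 2 * real (card E)"
    unfolding D_def d_def using handshake[OF sg] by (metis of_nat_mult of_nat_numeral of_nat_sum)
  have gsym: "g i j = g j i" for i j
    unfolding g_def by (simp add: adj_sym[of E i j] algebra_simps)
  have gdiag: "g j j = 4" if "j < N" for j
  proof -
    have "d j \<ge> 1" using dpos that by (simp add: d_def)
    then show ?thesis unfolding g_def using adj_irrefl[OF sg, of j] by (simp add: field_simps)
  qed
  have gform: "g i j = 2 + d i / d j + d j / d i - ((if adj E i j then 2 / d i else 0) + (if adj E i j then 2 / d j else 0))"
    if "i < N" "j < N" for i j
  proof -
    have "d i \<ge> 1" "d j \<ge> 1" using dpos that by (simp_all add: d_def)
    then show ?thesis unfolding g_def by (cases "adj E i j") (simp_all add: field_simps)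
  qed
  have full: "(\<Sum>j<N. \<Sum>i<N. g i j) = 2 * real N * real N + 2 * D * H - 4 * real N"
  proof -
    have "(\<Sum>j<N. \<Sum>i<N. g i j) = (\<Sum>j<N. \<Sum>i<N. 2 + d i / d j + d j / d i
        - ((if adj E i j then 2 / d i else 0) + (if adj E i j then 2 / d j else 0)))"
      by (intro sum.cong refl) (simp add: gform)
    also have "\<dots> = (\<Sum>j<N. \<Sum>i<N. (2::real)) + (\<Sum>j<N. \<Sum>i<N. d i / d j) + (\<Sum>j<N. \<Sum>i<N. d j / d i)
        - ((\<Sum>j<N. \<Sum>i<N. if adj E i j then 2 / d i else 0) + (\<Sum>j<N. \<Sum>i<N. if adj E i j then 2 / d j else 0))"
      by (simp add: sum.distrib sum_subtractf)
    also have "(\<Sum>j<N. \<Sum>i<N. d i / d j) = D * H"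
      unfolding D_def H_def by (simp add: sum_divide_distrib[symmetric] sum_distrib_left)
    also have "(\<Sum>j<N. \<Sum>i<N. d j / d i) = D * H"
    proof -
      have "(\<Sum>j<N. \<Sum>i<N. d j / d i) = (\<Sum>j<N. d j * H)"
        unfolding H_def by (simp add: sum_distrib_left)
      also have "\<dots> = D * H" unfolding D_def by (simp add: sum_distrib_right)
      finally show ?thesis .
    qed
    also have "(\<Sum>j<N. \<Sum>i<N. if adj E i j then 2 / d i else 0) = (\<Sum>i<N. \<Sum>j<N. if adj E i j then 2 / d i else 0)"
      by (rule sum.swap)
    also have "\<dots> = (\<Sum>i<N. (2 / d i) * d i)"
      by (intro sum.cong refl) (simp add: sum_adj1 d_def)
    also have "\<dots> = (\<Sum>i<N. 2)"
      by (intro sum.cong refl) (simp add: dnz)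
    also have "(\<Sum>j<N. \<Sum>i<N. if adj E i j then 2 / d j else 0) = (\<Sum>j<N. (2 / d j) * d j)"
      by (intro sum.cong refl) (simp add: sum_adj2 d_def)
    also have "\<dots> = (\<Sum>i<N. 2)"
      by (intro sum.cong refl) (simp add: dnz)
    finally show ?thesis by simp
  qed
  have diag: "(\<Sum>j<N. g j j) = 4 * real N" using gdiag by simp
  have "(\<Sum>j<N. \<Sum>i<j. g i j) = ((\<Sum>j<N. \<Sum>i<N. g i j) - (\<Sum>j<N. g j j)) / 2"
    using sym_sum[of g N] gsym by simp
  also have "\<dots> = real N * (real N - 4) + D * H" unfolding full diag by (simp add: field_simps)
  finally show ?thesis unfolding D2 H_def by simp
qed

lemma main_conditional:
  fixes N :: nat and E :: "nat set set"
  assumes N1: "N \<ge> 1" and sg: "simple_graph N E" and cg: "connected_graph N E"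
    and ex: "\<And>i j. i < N \<Longrightarrow> j < N \<Longrightarrow>
       \<exists>x. \<forall>k<N. Lap N E x k = (if k = i then 1 else 0) - (if k = j then 1 else 0)"
  shows "add_deg_kirchhoff N E \<ge>
           real N * (real N - 4) + 2 * real (card E) * (\<Sum>j<N. 1 / real (degree N E j))"
proof (cases "N = 1")
  case True
  have "{u. u < N \<and> adj E u 0} = {}" using adj_irrefl[OF sg] True by auto
  then have "degree N E 0 = 0" unfolding Defs.degree_def by simp
  then show ?thesis unfolding add_deg_kirchhoff_def True by simp
next
  case False
  then have N2: "N \<ge> 2" using N1 by simp
  define d where "d = (\<lambda>v. real (degree N E v))"
  have dpos: "real (degree N E v) \<ge> 1" if v: "v < N" for v
  proof -
    define w where "w = (if v = 0 then 1 else 0 :: nat)"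
    have w: "w < N" "v \<noteq> w" using N2 by (auto simp: w_def)
    obtain x where x: "\<forall>k<N. Lap N E x k = (if k = v then 1 else 0) - (if k = w then 1 else 0)"
      using ex[OF v w(1)] by blast
    show ?thesis by (rule pair_bound(1)[OF sg v w x])
  qed
  define g where "g = (\<lambda>i j. (d i + d j) * (1 / d i + 1 / d j - (if adj E i j then 2 / (d i * d j) else 0)))"
  have Rb: "g i j \<le> (d i + d j) * eff_res N E i j" if ij': "i < j" and jN: "j < N" for i j
  proof -
    have i: "i < N" and ij: "i \<noteq> j" using ij' jN by auto
    obtain x where x: "\<forall>k<N. Lap N E x k = (if k = i then 1 else 0) - (if k = j then 1 else 0)"
      using ex[OF i jN] by blast
    have e: "eff_res N E i j = x i - x j" by (rule eff_res_char[OF sg cg x i jN])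
    have b: "1 / d i + 1 / d j - (if adj E i j then 2 / (d i * d j) else 0) \<le> eff_res N E i j"
      unfolding e d_def by (rule pair_bound(2)[OF sg i jN ij x])
    have "0 \<le> d i + d j" by (simp add: d_def)
    then show ?thesis unfolding g_def using mult_left_mono[OF b] by simp
  qed
  have "(\<Sum>j<N. \<Sum>i<j. g i j) \<le> (\<Sum>j<N. \<Sum>i<j. (d i + d j) * eff_res N E i j)"
    by (intro sum_mono) (simp add: Rb)
  also have "\<dots> = add_deg_kirchhoff N E" unfolding add_deg_kirchhoff_def d_def by simp
  finally have le: "(\<Sum>j<N. \<Sum>i<j. g i j) \<le> add_deg_kirchhoff N E" .
  have "(\<Sum>j<N. \<Sum>i<j. g i j) = real N * (real N - 4) + 2 * real (card E) * (\<Sum>j<N. 1 / d j)"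
    unfolding g_def d_def by (rule final_sum[OF sg dpos])
  then show ?thesis using le unfolding d_def by simp
qed



definition LapM :: "nat \<Rightarrow> nat set set \<Rightarrow> real mat" where
  "LapM N E = mat N N (\<lambda>(k, l). (if k = l then (\<Sum>m<N. if adj E k m then 1 else 0) else 0)
       - (if adj E k l then 1 else 0) + 1)"

lemma LapM_carrier: "LapM N E \<in> carrier_mat N N"
  unfolding LapM_def by simp

lemma LapM_mult:
  assumes v: "dim_vec v = N" and k: "k < N"
  shows "(LapM N E *\<^sub>v v) $ k = Lap N E (\<lambda>i. v $ i) k + (\<Sum>l<N. v $ l)"
proof -
  let ?dg = "(\<Sum>m<N. if adj E k m then 1 else (0::real))"
  have "(LapM N E *\<^sub>v v) $ k = (\<Sum>l<N. ((if k = l then ?dg else 0)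
       - (if adj E k l then 1 else 0) + 1) * v $ l)"
    using v k unfolding LapM_def
    by (simp add: scalar_prod_def lessThan_atLeast0)
  also have "\<dots> = (\<Sum>l<N. (if k = l then ?dg * v $ l else 0))
       - (\<Sum>l<N. if adj E k l then v $ l else 0) + (\<Sum>l<N. v $ l)"
  proof -
    have "((if k = l then ?dg else 0) - (if adj E k l then 1 else 0) + 1) * v $ l
        = (if k = l then ?dg * v $ l else 0) - (if adj E k l then v $ l else 0) + v $ l" for l
      by (simp add: algebra_simps)
    then show ?thesis by (simp add: sum.distrib sum_subtractf)
  qed
  also have "(\<Sum>l<N. (if k = l then ?dg * v $ l else 0)) = ?dg * v $ k"
    using k by simp
  also have "?dg * v $ k = (\<Sum>m<N. if adj E k m then v $ k else 0)"
    by (simp add: sum_distrib_right) (intro sum.cong refl, simp)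
  finally have "(LapM N E *\<^sub>v v) $ k = (\<Sum>m<N. if adj E k m then v $ k else 0)
       - (\<Sum>l<N. if adj E k l then v $ l else 0) + (\<Sum>l<N. v $ l)" .
  moreover have "Lap N E (\<lambda>i. v $ i) k = (\<Sum>m<N. if adj E k m then v $ k else 0)
       - (\<Sum>l<N. if adj E k l then v $ l else 0)"
    unfolding Lap_def by (simp add: sum_subtractf[symmetric]) (intro sum.cong refl, simp)
  ultimately show ?thesis by simp
qed

lemma LapM_inj:
  assumes N1: "N \<ge> 1" and sg: "simple_graph N E" and cg: "connected_graph N E"
    and v: "v \<in> carrier_vec N" and z: "LapM N E *\<^sub>v v = 0\<^sub>v N"
  shows "v = 0\<^sub>v N"
proof -
  define y where "y = (\<lambda>i. v $ i)"
  define S where "S = (\<Sum>l<N. v $ l)"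
  have dv: "dim_vec v = N" using v by simp
  have e: "Lap N E y k + S = 0" if "k < N" for k
  proof -
    have "(LapM N E *\<^sub>v v) $ k = 0" using z that by simp
    then show ?thesis using LapM_mult[OF dv that] unfolding y_def S_def by simp
  qed
  have "(\<Sum>k<N. Lap N E y k + S) = 0" using e by simp
  then have "real N * S = 0" using lap_sum[of N E y] by (simp add: sum.distrib)
  then have S0: "S = 0" using N1 by simp
  have L0: "\<forall>k<N. Lap N E y k = 0" using e S0 by simp
  have const: "y k = y 0" if "k < N" for k using lap_zero_const[OF sg cg L0 that] N1 by simp
  have "S = (\<Sum>l<N. y l)" by (simp add: S_def y_def)
  also have "\<dots> = (\<Sum>l<N. y 0)"
  proof (rule sum.cong[OF refl])
    fix l assume "l \<in> {..<N}"
    then have "l < N" by simp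
    then show "y l = y 0" by (rule const)
  qed
  finally have "S = real N * y 0" by simp
  then have y0: "y 0 = 0" using S0 N1 by simp
  show ?thesis
  proof (rule eq_vecI)
    fix i assume "i < dim_vec (0\<^sub>v N :: real vec)"
    then have "i < N" by simp
    then show "v $ i = 0\<^sub>v N $ i" using const[of i] y0 by (simp add: y_def)
  qed (simp add: dv)
qed

lemma exists_sol:
  assumes N1: "N \<ge> 1" and sg: "simple_graph N E" and cg: "connected_graph N E"
    and bs: "(\<Sum>k<N. b k) = 0"
  shows "\<exists>x. \<forall>k<N. Lap N E x k = b k"
proof -
  have C: "LapM N E \<in> carrier_mat N N" by (rule LapM_carrier)
  have "det (LapM N E) \<noteq> 0"
  proof
    assume "det (LapM N E) = 0"
    then have "\<exists>v. v \<in> carrier_vec N \<and> v \<noteq> 0\<^sub>v N \<and> LapM N E *\<^sub>v v = 0\<^sub>v N"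
      using det_0_iff_vec_prod_zero[OF C] by simp
    then obtain v where v: "v \<in> carrier_vec N" "v \<noteq> 0\<^sub>v N" "LapM N E *\<^sub>v v = 0\<^sub>v N"
      by (elim exE conjE) simp
    show False using LapM_inj[OF N1 sg cg v(1) v(3)] v(2) by simp
  qed
  then have "LapM N E \<in> Units (ring_mat TYPE(real) N undefined)"
    by (rule det_non_zero_imp_unit[OF C])
  then have "\<exists>B\<in>carrier_mat N N. B * LapM N E = 1\<^sub>m N \<and> LapM N E * B = 1\<^sub>m N"
    by (simp add: Units_def ring_mat_def)
  then obtain B where B: "B \<in> carrier_mat N N" and MB: "LapM N E * B = 1\<^sub>m N"
    by (elim bexE conjE) simp
  define xv where "xv = B *\<^sub>v vec N b"
  have dx: "dim_vec xv = N" using B by (simp add: xv_def)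
  have "LapM N E *\<^sub>v xv = (LapM N E * B) *\<^sub>v vec N b"
    unfolding xv_def using C B by (simp add: assoc_mult_mat_vec)
  also have "\<dots> = vec N b" unfolding MB by simp
  finally have Mx: "LapM N E *\<^sub>v xv = vec N b" .
  define y where "y = (\<lambda>i. xv $ i)"
  define S where "S = (\<Sum>l<N. xv $ l)"
  have e: "Lap N E y k + S = b k" if "k < N" for k
  proof -
    have "(LapM N E *\<^sub>v xv) $ k = b k" using Mx that by simp
    then show ?thesis using LapM_mult[OF dx that] unfolding y_def S_def by simp
  qed
  have "(\<Sum>k<N. Lap N E y k + S) = 0" using e bs by simp
  then have "real N * S = 0" using lap_sum[of N E y] by (simp add: sum.distrib)
  then have S0: "S = 0" using N1 by simp
  have "\<forall>k<N. Lap N E y k = b k" using e S0 by simp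
  then show ?thesis by (rule exI[of _ y])
qed


theorem theorem1:
  fixes N :: nat and E :: "nat set set"
  assumes "N \<ge> 1"
    and "simple_graph N E"
    and "connected_graph N E"
  shows "add_deg_kirchhoff N E \<ge>
           real N * (real N - 4) + 2 * real (card E) * (\<Sum>j<N. 1 / real (degree N E j))"
proof -
  have ex: "\<exists>x. \<forall>k<N. Lap N E x k = (if k = i then 1 else 0) - (if k = j then 1 else 0)"
    if i: "i < N" and j: "j < N" for i j
  proof -
    have s: "(\<Sum>k<N. (if k = i then 1 else 0) - (if k = j then (1::real) else 0)) = 0"
      using i j by (simp add: sum_subtractf)
    show ?thesis
      using exists_sol[OF assms(1) assms(2) assms(3), of "\<lambda>k. (if k = i then 1 else 0) - (if k = j then (1::real) else 0)"] s
      by simp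
  qed
  show ?thesis by (rule main_conditional[OF assms ex])
qed

end
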